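(* Let $U:(0,\infty)\to\mathbb R$ be a $C^2$ function, and consider the system $\dot x=v$, $\dot v=-U'(|x|)x/|x|$ on $\mathbb R^3_0\times\mathbb R^3$ with $E(x,v)=\tfrac12|v|^2+U(|x|)$ and $L(x,v)=x\times v$. Take $(x_0,v_0)\in\mathbb R^3_0\times\mathbb R^3$ with $x_0\times v_0\ne0$, set $E_0=E(x_0,v_0)$, $L_0=L(x_0,v_0)$, and with $k_1,k_2>0$ let $V(x,v)=\tfrac{k_1}{2}|E(x,v)-E_0|^2+\tfrac{k_2}{2}|L(x,v)-L_0|^2$. Suppose $V^{-1}(0)$ is compact and there is no $r>0$ satisfying simultaneously $$E_0=\tfrac12 rU'(r)+U(r)\quad\text{and}\quad |L_0|^2=r^3U'(r).$$ Then (after restricting, if necessary, to an open neighborhood of $V^{-1}(0)$) there is $c>0$ such that $V^{-1}([0,c])$ is compact and its only critical points of $V$ are those in $V^{-1}(0)$, and every trajectory of $$\dot x = v - k_1\Delta E\,U'(|x|)\tfrac{x}{|x|} - k_2 v\times\Delta L,\qquad \dot v = -U'(|x|)\tfrac{x}{|x|} - k_1\Delta E\, v - k_2\Delta L\times x,$$ with $\Delta E=E(x,v)-E_0$, $\Delta L=L(x,v)-L_0$, starting in $V^{-1}([0,c])$ remains in $V^{-1}([0,c])$ for all $t\ge0$ and converges to $V^{-1}(0)=\{(x,v):E(x,v)=E_0,\ L(x,v)=L_0\}$ as $t\to\infty$.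
   Context: $\mathbb R^3_0=\mathbb R^3\setminus\{0\}$. *)

theory Defs
  imports "HOL-Analysis.Analysis" "HOL-Analysis.Cross3"
begin

type_synonym state = "(real^3) \<times> (real^3)"

definition energy :: "(real \<Rightarrow> real) \<Rightarrow> state \<Rightarrow> real" where
  "energy U z = (norm (snd z))\<^sup>2 / 2 + U (norm (fst z))"

definition angmom :: "state \<Rightarrow> real^3" where
  "angmom z = cross3 (fst z) (snd z)"

definition lyap :: "(real \<Rightarrow> real) \<Rightarrow> real \<Rightarrow> real \<Rightarrow> real \<Rightarrow> real^3 \<Rightarrow> state \<Rightarrow> real" where
  "lyap U k1 k2 E0 L0 z =
     k1 / 2 * (energy U z - E0)\<^sup>2 + k2 / 2 * (norm (angmom z - L0))\<^sup>2"

text \<open>The controlled vector field; dU is the derivative U'.\<close>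
definition ctrl_field ::
  "(real \<Rightarrow> real) \<Rightarrow> (real \<Rightarrow> real) \<Rightarrow> real \<Rightarrow> real \<Rightarrow> real \<Rightarrow> real^3 \<Rightarrow> state \<Rightarrow> state" where
  "ctrl_field U dU k1 k2 E0 L0 z =
     (let x = fst z; v = snd z;
          dE = energy U z - E0; dL = angmom z - L0
      in (v - (k1 * dE * dU (norm x) / norm x) *\<^sub>R x - k2 *\<^sub>R cross3 v dL,
          - (dU (norm x) / norm x) *\<^sub>R x - (k1 * dE) *\<^sub>R v - k2 *\<^sub>R cross3 dL x))"

definition phase :: "state set" where
  "phase = {z. fst z \<noteq> 0}"

end

theory Submission
  imports Defs
begin

lemma bb_cross: "bounded_bilinear (cross3 :: real^3 \<Rightarrow> real^3 \<Rightarrow> real^3)"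
  using bilinear_conv_bounded_bilinear bilinear_cross by blast

definition gradV :: "(real\<Rightarrow>real) \<Rightarrow> (real\<Rightarrow>real) \<Rightarrow> real \<Rightarrow> real \<Rightarrow> real \<Rightarrow> real^3 \<Rightarrow> state \<Rightarrow> state" where
 "gradV U dU k1 k2 E0 L0 z = (let x = fst z; v = snd z; e = energy U z - E0; l = angmom z - L0 in
   ((k1*e*dU(norm x)/norm x) *\<^sub>R x + k2 *\<^sub>R cross3 v l, (k1*e) *\<^sub>R v + k2 *\<^sub>R cross3 l x))"

lemma ctrl_eq: "ctrl_field U dU k1 k2 E0 L0 z =
   (snd z, -(dU(norm(fst z))/norm(fst z)) *\<^sub>R fst z) - gradV U dU k1 k2 E0 L0 z"
  by (simp add: ctrl_field_def gradV_def Let_def algebra_simps)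

lemma energy_deriv:
  assumes U: "\<And>r. r > 0 \<Longrightarrow> (U has_real_derivative dU r) (at r)" and x: "fst z \<noteq> 0"
  shows "(energy U has_derivative (\<lambda>h. snd z \<bullet> snd h + (dU (norm (fst z)) / norm (fst z)) * (fst z \<bullet> fst h))) (at z)"
proof -
  have n: "((\<lambda>z. norm (fst z)) has_derivative (\<lambda>h. fst h \<bullet> sgn (fst z))) (at z)"
    using has_derivative_compose[OF has_derivative_fst[OF has_derivative_ident] has_derivative_norm[OF x]]
    by simp
  have u: "(U has_derivative (\<lambda>h. h * dU (norm (fst z)))) (at (norm (fst z)))"
    using U[of "norm (fst z)"] x unfolding has_field_derivative_def
    by (rule_tac has_derivative_eq_rhs) (auto simp: fun_eq_iff)
  have un: "((\<lambda>z. U (norm (fst z))) has_derivative (\<lambda>h. (fst h \<bullet> sgn (fst z)) * dU (norm (fst z)))) (at z)"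
    using has_derivative_compose[OF n u] by simp
  have v: "((\<lambda>z. (norm (snd z))\<^sup>2 / 2) has_derivative (\<lambda>h. snd z \<bullet> snd h)) (at z)"
    unfolding power2_norm_eq_inner
    by (rule derivative_eq_intros refl | simp add: inner_commute)+
  show ?thesis unfolding energy_def
    by (rule has_derivative_eq_rhs[OF has_derivative_add[OF v un]])
       (auto simp: sgn_div_norm inner_commute fun_eq_iff field_simps)
qed

lemma angmom_deriv: "(angmom has_derivative (\<lambda>h. cross3 (fst h) (snd z) + cross3 (fst z) (snd h))) (at z)"
  unfolding angmom_def
  by (rule has_derivative_eq_rhs[OF bounded_bilinear.FDERIV[OF bb_cross has_derivative_fst[OF has_derivative_ident]
     has_derivative_snd[OF has_derivative_ident]]]) (auto simp: fun_eq_iff add.commute)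

lemma triple1: "(a::real^3) \<bullet> cross3 b c = b \<bullet> cross3 c a"
  by (simp add: cross3_simps)
lemma triple2: "(a::real^3) \<bullet> cross3 b c = c \<bullet> cross3 a b"
  by (simp add: cross3_simps)

lemma alg1: "k1 * e * (v \<bullet> b + d/n * (x \<bullet> a)) + k2 * (l \<bullet> (cross3 a v + cross3 x b))
   = ((k1*e*d/n) *\<^sub>R x + k2 *\<^sub>R cross3 v l, (k1*e) *\<^sub>R v + k2 *\<^sub>R cross3 l x) \<bullet> (a,b)"
  by (simp add: inner_prod_def inner_add_left inner_add_right algebra_simps triple1[of l a v] triple2[of l x b] inner_commute)

lemma alg2: "((k1*e*d/n) *\<^sub>R x + k2 *\<^sub>R cross3 v l, (k1*e) *\<^sub>R v + k2 *\<^sub>R cross3 l x) \<bullet> (v, -(d/n) *\<^sub>R x) = (0::real)"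
  by (simp add: inner_prod_def inner_add_left inner_add_right algebra_simps dot_cross_self inner_commute)

lemma lyap_deriv:
  assumes U: "\<And>r. r > 0 \<Longrightarrow> (U has_real_derivative dU r) (at r)" and x: "fst z \<noteq> 0"
  shows "(lyap U k1 k2 E0 L0 has_derivative (\<lambda>h. gradV U dU k1 k2 E0 L0 z \<bullet> h)) (at z)"
proof -
  note e = energy_deriv[OF U x]
  have e2: "((\<lambda>z. k1/2 * (energy U z - E0)\<^sup>2) has_derivative
     (\<lambda>h. k1 * (energy U z - E0) * (snd z \<bullet> snd h + (dU (norm (fst z)) / norm (fst z)) * (fst z \<bullet> fst h)))) (at z)"
    apply (rule has_derivative_eq_rhs)
    apply (rule derivative_eq_intros e refl | simp)+
    apply (simp add: fun_eq_iff field_simps)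
    done
  have l2: "((\<lambda>z. k2/2 * (norm (angmom z - L0))\<^sup>2) has_derivative
     (\<lambda>h. k2 * ((angmom z - L0) \<bullet> (cross3 (fst h) (snd z) + cross3 (fst z) (snd h))))) (at z)"
    unfolding power2_norm_eq_inner
    by (rule derivative_eq_intros angmom_deriv refl | simp add: inner_commute)+
  show ?thesis unfolding lyap_def
    apply (rule has_derivative_eq_rhs[OF has_derivative_add[OF e2 l2]])
    unfolding gradV_def Let_def fun_eq_iff
    apply (simp only: alg1)
    apply (simp add: algebra_simps)
    done
qed

lemma grad_field_orth: "gradV U dU k1 k2 E0 L0 z \<bullet> (snd z, -(dU(norm(fst z))/norm(fst z)) *\<^sub>R fst z) = 0"
  unfolding gradV_def Let_def by (rule alg2)

lemma grad_ctrl: "gradV U dU k1 k2 E0 L0 z \<bullet> ctrl_field U dU k1 k2 E0 L0 z = - (norm (gradV U dU k1 k2 E0 L0 z))\<^sup>2"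
  unfolding ctrl_eq inner_diff_right grad_field_orth by (simp add: power2_norm_eq_inner)

definition LB :: "'a::metric_space set \<Rightarrow> ('a \<Rightarrow> 'b::real_normed_vector) \<Rightarrow> bool" where
  "LB S f \<longleftrightarrow> (\<exists>L. L-lipschitz_on S f) \<and> bounded (f ` S)"

lemma LB_const: "LB S (\<lambda>_. c)"
  unfolding LB_def by (auto intro: lipschitz_on_constant bounded_subset[of "{c}"])

lemma LB_add: "LB S f \<Longrightarrow> LB S g \<Longrightarrow> LB S (\<lambda>z. f z + g z)"
  unfolding LB_def by (auto intro: lipschitz_on_add bounded_plus_comp)

lemma LB_diff: "LB S f \<Longrightarrow> LB S g \<Longrightarrow> LB S (\<lambda>z. f z - g z)"
  unfolding LB_def by (auto intro: lipschitz_on_diff bounded_minus_comp)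

lemma LB_minus: "LB S f \<Longrightarrow> LB S (\<lambda>z. - f z)"
  unfolding LB_def by (auto intro: lipschitz_on_minus bounded_uminus simp: image_image[symmetric])

lemma LB_bil:
  assumes p: "bounded_bilinear p" and f: "LB S f" and g: "LB S g"
  shows "LB S (\<lambda>z. p (f z) (g z))"
proof -
  obtain K where K: "K > 0" "\<And>a b. norm (p a b) \<le> norm a * norm b * K"
    using bounded_bilinear.pos_bounded[OF p] by blast
  obtain Lf where Lf: "Lf-lipschitz_on S f" using f LB_def by blast
  obtain Lg where Lg: "Lg-lipschitz_on S g" using g LB_def by blast
  obtain Bf where Bf: "\<And>x. x \<in> S \<Longrightarrow> norm (f x) \<le> Bf" using f unfolding LB_def bounded_iff by auto
  obtain Bg where Bg: "\<And>x. x \<in> S \<Longrightarrow> norm (g x) \<le> Bg" using g unfolding LB_def bounded_iff by auto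
  have Lf0: "Lf \<ge> 0" using lipschitz_on_nonneg[OF Lf] .
  have Lg0: "Lg \<ge> 0" using lipschitz_on_nonneg[OF Lg] .
  have "(K * Lf * \<bar>Bg\<bar> + K * \<bar>Bf\<bar> * Lg)-lipschitz_on S (\<lambda>z. p (f z) (g z))"
  proof (rule lipschitz_onI)
    fix x y assume x: "x \<in> S" and y: "y \<in> S"
    have eq: "p (f x) (g x) - p (f y) (g y) = p (f x - f y) (g x) + p (f y) (g x - g y)"
      by (simp add: bounded_bilinear.diff_left[OF p] bounded_bilinear.diff_right[OF p])
    have a: "norm (p (f x - f y) (g x)) \<le> K * Lf * \<bar>Bg\<bar> * dist x y"
    proof -
      have "norm (p (f x - f y) (g x)) \<le> norm (f x - f y) * norm (g x) * K" by (rule K(2))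
      also have "\<dots> \<le> (Lf * dist x y) * \<bar>Bg\<bar> * K"
        using lipschitz_onD[OF Lf x y] Bg[OF x] K(1) Lf0
        by (intro mult_right_mono mult_mono) (auto simp: dist_norm)
      finally show ?thesis by (simp add: algebra_simps)
    qed
    have b: "norm (p (f y) (g x - g y)) \<le> K * \<bar>Bf\<bar> * Lg * dist x y"
    proof -
      have "norm (p (f y) (g x - g y)) \<le> norm (f y) * norm (g x - g y) * K" by (rule K(2))
      also have "\<dots> \<le> \<bar>Bf\<bar> * (Lg * dist x y) * K"
        using lipschitz_onD[OF Lg x y] Bf[OF y] K(1) Lg0
        by (intro mult_right_mono mult_mono) (auto simp: dist_norm)
      finally show ?thesis by (simp add: algebra_simps)
    qed
    show "dist (p (f x) (g x)) (p (f y) (g y)) \<le> (K * Lf * \<bar>Bg\<bar> + K * \<bar>Bf\<bar> * Lg) * dist x y"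
      unfolding dist_norm eq using norm_triangle_le[OF add_mono[OF a b]]
      by (simp add: algebra_simps dist_norm)
  next
    show "0 \<le> K * Lf * \<bar>Bg\<bar> + K * \<bar>Bf\<bar> * Lg" using K Lf0 Lg0 by simp
  qed
  moreover have "bounded ((\<lambda>z. p (f z) (g z)) ` S)"
    unfolding bounded_iff
  proof (intro exI ballI)
    fix y assume "y \<in> (\<lambda>z. p (f z) (g z)) ` S"
    then obtain x where x: "x \<in> S" "y = p (f x) (g x)" by auto
    have "norm y \<le> norm (f x) * norm (g x) * K" using K(2) x by simp
    also have "\<dots> \<le> \<bar>Bf\<bar> * \<bar>Bg\<bar> * K"
      using Bf[OF x(1)] Bg[OF x(1)] K(1) by (intro mult_right_mono mult_mono) auto
    finally show "norm y \<le> \<bar>Bf\<bar> * \<bar>Bg\<bar> * K" .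
  qed
  ultimately show ?thesis unfolding LB_def by blast
qed

lemma LB_linear:
  assumes "bounded_linear f" "bounded S"
  shows "LB S f"
proof -
  obtain K where K: "K > 0" "\<And>x. norm (f x) \<le> norm x * K"
    using bounded_linear.pos_bounded[OF assms(1)] by blast
  have "K-lipschitz_on S f"
    by (rule lipschitz_onI) (use K in \<open>auto simp: dist_norm linear_diff[OF bounded_linear.linear[OF assms(1)], symmetric] mult.commute\<close>)
  moreover have "bounded (f ` S)"
    using assms bounded_linear_image by blast
  ultimately show ?thesis unfolding LB_def by blast
qed

lemma LB_comp:
  assumes g: "LB T g" and f: "LB S f" and fS: "f ` S \<subseteq> T"
  shows "LB S (\<lambda>z. g (f z))"
proof -
  obtain Lf where Lf: "Lf-lipschitz_on S f" using f LB_def by blast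
  obtain Lg where Lg: "Lg-lipschitz_on T g" using g LB_def by blast
  have "(Lg * Lf)-lipschitz_on S (\<lambda>z. g (f z))"
    using lipschitz_on_compose[OF Lf lipschitz_on_subset[OF Lg fS]] by (simp add: o_def mult.commute)
  moreover have "bounded ((\<lambda>z. g (f z)) ` S)"
    by (rule bounded_subset[of "g ` T"]) (use g fS LB_def in auto)
  ultimately show ?thesis unfolding LB_def by blast
qed

lemma LB_Pair: "LB S f \<Longrightarrow> LB S g \<Longrightarrow> LB S (\<lambda>z. (f z, g z))"
proof -
  assume f: "LB S f" and g: "LB S g"
  obtain Lf where Lf: "Lf-lipschitz_on S f" using f LB_def by blast
  obtain Lg where Lg: "Lg-lipschitz_on S g" using g LB_def by blast
  have "(sqrt (Lf\<^sup>2 + Lg\<^sup>2))-lipschitz_on S (\<lambda>z. (f z, g z))"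
    by (rule lipschitz_on_Pair[OF Lf Lg])
  moreover have "bounded ((\<lambda>z. (f z, g z)) ` S)"
    by (rule bounded_subset[of "f ` S \<times> g ` S"]) (use f g in \<open>auto simp: LB_def intro!: bounded_Times\<close>)
  ultimately show ?thesis unfolding LB_def by blast
qed

lemma LB_deriv1:
  fixes f :: "real \<Rightarrow> real"
  assumes d: "\<And>r. r \<in> {a..b} \<Longrightarrow> (f has_real_derivative f' r) (at r)"
    and c: "continuous_on {a..b} f'"
  shows "LB {a..b} f"
proof -
  have "compact (f' ` {a..b})" by (rule compact_continuous_image[OF c compact_Icc])
  then obtain B where B: "\<And>r. r \<in> {a..b} \<Longrightarrow> norm (f' r) \<le> B"
    using compact_imp_bounded bounded_iff by (metis image_eqI)
  have fc: "continuous_on {a..b} f"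
    by (rule continuous_at_imp_continuous_on) (use d DERIV_isCont in blast)
  have le: "\<bar>f y - f x\<bar> \<le> \<bar>B\<bar> * (y - x)" if hx: "x \<in> {a..b}" and hy: "y \<in> {a..b}" and "x < y" for x y
  proof -
    obtain z where z: "x < z" "z < y" "f y - f x = (y - x) * f' z"
    proof -
      have "\<And>r. x \<le> r \<Longrightarrow> r \<le> y \<Longrightarrow> (f has_real_derivative f' r) (at r)"
        using d hx hy by auto
      then show ?thesis using MVT2[OF \<open>x < y\<close>, of f f'] that by blast
    qed
    have "z \<in> {a..b}" using z hx hy by auto
    then have "\<bar>f' z\<bar> \<le> \<bar>B\<bar>" using B by force
    then show ?thesis using z \<open>x < y\<close> by (simp add: abs_mult mult.commute mult_left_mono)
  qed
  have "\<bar>B\<bar>-lipschitz_on {a..b} f"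
  proof (rule lipschitz_onI)
    fix x y assume x: "x \<in> {a..b}" and y: "y \<in> {a..b}"
    consider "x < y" | "x = y" | "y < x" by linarith
    then show "dist (f x) (f y) \<le> \<bar>B\<bar> * dist x y"
    proof cases
      case 1 then show ?thesis using le[OF x y] by (simp add: dist_real_def abs_minus_commute)
    next
      case 3 then show ?thesis using le[OF y x] by (simp add: dist_real_def abs_minus_commute)
    qed simp
  qed simp
  moreover have "bounded (f ` {a..b})"
    by (rule compact_imp_bounded[OF compact_continuous_image[OF fc compact_Icc]])
  ultimately show ?thesis unfolding LB_def by blast
qed

lemma LB_norm: "bounded S \<Longrightarrow> LB S (\<lambda>x. norm x)"
proof -
  have "1-lipschitz_on S norm"
    by (rule lipschitz_onI) (auto simp: dist_norm norm_triangle_ineq3)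
  then show "bounded S \<Longrightarrow> LB S (\<lambda>x. norm x)"
    unfolding LB_def by (auto simp: bounded_norm_comp)
qed

lemma indef_deriv:
  fixes h :: "real \<Rightarrow> 'a::banach"
  assumes "continuous_on UNIV h" "u \<ge> 0"
  shows "((\<lambda>t. integral {0..t} h) has_vector_derivative h u) (at u within {0..})"
proof -
  have "((\<lambda>t. integral {0..t} h) has_vector_derivative h u) (at u within {0..u+1})"
    by (rule integral_has_vector_derivative) (auto intro: continuous_on_subset[OF assms(1)] simp: assms)
  moreover have "at u within {0..u+1} = at u within {0..}"
    by (rule at_within_nhd[where S="{..<u+1}"]) auto
  ultimately show ?thesis by simp
qed

lemma indef_cont:
  fixes h :: "real \<Rightarrow> 'a::banach"
  assumes "continuous_on UNIV h"
  shows "continuous_on UNIV (\<lambda>t. integral {0..t} h)"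
proof -
  have c: "continuous_on {0..} (\<lambda>t. integral {0..t} h)"
    unfolding continuous_on_eq_continuous_within
  proof
    fix x :: real assume "x \<in> {0..}"
    then show "continuous (at x within {0..}) (\<lambda>t. integral {0..t} h)"
      using indef_deriv[OF assms, of x] has_vector_derivative_continuous by auto
  qed
  have "continuous_on UNIV ((\<lambda>t. integral {0..t} h) \<circ> (\<lambda>t. max 0 t))"
    by (rule continuous_on_compose) (auto intro!: continuous_intros continuous_on_subset[OF c])
  moreover have "((\<lambda>t. integral {0..t} h) \<circ> (\<lambda>t. max 0 t)) = (\<lambda>t. integral {0..t} h)"
    by (auto simp: fun_eq_iff max_def)
  ultimately show ?thesis by simp
qed

lemma indef_bound:
  fixes h :: "real \<Rightarrow> 'a::banach"
  assumes "continuous_on UNIV h" "\<And>s. norm (h s) \<le> M"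
  shows "norm (integral {0..t} h) \<le> M * max 0 t"
proof (cases "t \<ge> 0")
  case True
  have "M \<ge> 0" using assms(2)[of 0] norm_ge_zero[of "h 0"] by linarith
  have "h integrable_on cbox 0 t"
    by (auto intro!: integrable_continuous_real continuous_on_subset[OF assms(1)])
  then show ?thesis using True integrable_bound[of M h 0 t] \<open>M\<ge>0\<close> assms(2) by simp
next
  case False then show ?thesis by simp
qed

lemma picard_global:
  fixes G :: "'a::euclidean_space \<Rightarrow> 'a"
  assumes lip: "L-lipschitz_on UNIV G" and bnd: "\<And>z. norm (G z) \<le> M"
  shows "\<exists>z. z 0 = z0 \<and> (\<forall>t\<ge>0. (z has_vector_derivative G (z t)) (at t within {0..}))"
proof -
  define K where "K = L + 1"
  have L0: "L \<ge> 0" using lipschitz_on_nonneg[OF lip] .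
  have K0: "K > 0" using L0 by (simp add: K_def)
  have lipK: "K-lipschitz_on UNIV G" by (rule lipschitz_on_mono[OF lip]) (auto simp: K_def)
  have M0: "M \<ge> 0" using bnd[of 0] norm_ge_zero[of "G 0"] by linarith
  have Gc: "continuous_on UNIV G" using lipschitz_on_continuous_on[OF lip] .
  define w where "w t = exp (2*K*max 0 t)" for t
  have w1: "w t \<ge> 1" for t unfolding w_def using K0 by simp
  have wc: "continuous_on UNIV w" unfolding w_def by (intro continuous_intros)
  define hh where "hh \<psi> s = G (w s *\<^sub>R apply_bcontfun \<psi> s)" for \<psi> s
  define f where "f \<psi> t = (1 / w t) *\<^sub>R (z0 + integral {0..t} (hh \<psi>))" for \<psi> t
  have hhc: "continuous_on UNIV (hh \<psi>)" for \<psi>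
    unfolding hh_def
    by (rule continuous_on_compose2[OF Gc]) (auto intro!: continuous_intros wc)
  have hhb: "norm (hh \<psi> s) \<le> M" for \<psi> s unfolding hh_def by (rule bnd)
  have fb: "f \<psi> \<in> bcontfun" for \<psi>
  proof -
    have "continuous_on UNIV (f \<psi>)"
      unfolding f_def using w1
      by (intro continuous_intros indef_cont hhc wc) (metis w1 not_one_le_zero)
    moreover have "norm (f \<psi> t) \<le> norm z0 + M / (2*K)" for t
    proof -
      define T where "T = max 0 t"
      have T0: "T \<ge> 0" by (simp add: T_def)
      have "norm (f \<psi> t) = (1 / w t) * norm (z0 + integral {0..t} (hh \<psi>))"
        unfolding f_def using w1[of t] by simp
      also have "\<dots> \<le> (1 / w t) * (norm z0 + M * T)"
        using indef_bound[OF hhc[of \<psi>] hhb[of \<psi>], of t] w1[of t] norm_triangle_ineq[of z0 "integral {0..t} (hh \<psi>)"]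
        by (intro mult_left_mono) (auto simp: T_def)
      also have "\<dots> \<le> norm z0 + M / (2*K)"
      proof -
        have e: "2*K*T \<le> exp (2*K*T)"
          using exp_ge_add_one_self[of "2*K*T"] by linarith
        have "T \<le> exp(2*K*T) / (2*K)" using e K0 by (simp add: field_simps)
        hence "M * T \<le> M * (exp(2*K*T) / (2*K))" using M0 by (rule mult_left_mono)
        hence "M * T / exp(2*K*T) \<le> M * (exp(2*K*T) / (2*K)) / exp(2*K*T)"
          by (rule divide_right_mono) simp
        hence "M * T / exp(2*K*T) \<le> M / (2*K)" by simp
        moreover have "norm z0 / exp(2*K*T) \<le> norm z0 / 1"
          using T0 K0 by (intro divide_left_mono) auto
        ultimately show ?thesis unfolding w_def T_def[symmetric]
          by (simp add: add_divide_distrib)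
      qed
      finally show ?thesis .
    qed
    ultimately show ?thesis unfolding bcontfun_def
      by (auto intro!: boundedI)
  qed
  define Q where "Q \<psi> = Bcontfun (f \<psi>)" for \<psi>
  have Qap: "apply_bcontfun (Q \<psi>) = f \<psi>" for \<psi>
    unfolding Q_def using fb Bcontfun_inverse by blast
  have contr: "dist (Q pa) (Q pb) \<le> (1/2) * dist pa pb" for pa pb
  proof (rule dist_bound)
    fix t
    define D where "D = dist pa pb"
    have D0: "D \<ge> 0" by (simp add: D_def)
    show "dist (apply_bcontfun (Q pa) t) (apply_bcontfun (Q pb) t) \<le> (1/2) * dist pa pb"
    proof (cases "t \<ge> 0")
      case False
      then show ?thesis unfolding Qap f_def by simp
    next
      case True
      have int: "hh \<psi> integrable_on {0..t}" for \<psi>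
        by (rule integrable_continuous_real) (auto intro: continuous_on_subset[OF hhc])
      have pt: "norm (hh pa s - hh pb s) \<le> D * K * exp (2*K * s)" if "s \<in> {0..t}" for s
      proof -
        have "norm (hh pa s - hh pb s) \<le> K * dist (w s *\<^sub>R apply_bcontfun pa s) (w s *\<^sub>R apply_bcontfun pb s)"
          unfolding hh_def using lipschitz_onD[OF lipK] by (simp add: dist_norm)
        also have "\<dots> = K * (w s * dist (apply_bcontfun pa s) (apply_bcontfun pb s))"
          using w1[of s] by (simp add: dist_norm scaleR_diff_right[symmetric])
        also have "\<dots> \<le> K * (w s * D)"
          using dist_bounded[of pa s pb] K0 w1[of s] unfolding D_def
          by (intro mult_left_mono) auto
        finally show ?thesis using that unfolding w_def by (simp add: algebra_simps)
      qed
      have ftc: "((\<lambda>s. D * K * exp (2*K * s)) has_integral (D * exp (2*K*t) / 2 - D * exp (2*K*0) / 2)) {0..t}"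
        by (rule fundamental_theorem_of_calculus[OF True])
           (auto intro!: derivative_eq_intros simp: has_real_derivative_iff_has_vector_derivative[symmetric] field_simps)
      have "norm (integral {0..t} (hh pa) - integral {0..t} (hh pb)) =
            norm (integral {0..t} (\<lambda>s. hh pa s - hh pb s))"
        using integral_diff[OF int int] by simp
      also have "\<dots> \<le> integral {0..t} (\<lambda>s. D * K * exp (2*K * s))"
        by (rule integral_norm_bound_integral) (auto intro: integrable_diff int ftc[THEN has_integral_integrable] pt)
      also have "\<dots> = D * exp (2*K*t) / 2 - D / 2"
        using integral_unique[OF ftc] by simp
      finally have n: "norm (integral {0..t} (hh pa) - integral {0..t} (hh pb)) \<le> D * exp (2*K*t) / 2 - D / 2" .
      have "dist (f pa t) (f pb t) = (1 / w t) * norm (integral {0..t} (hh pa) - integral {0..t} (hh pb))"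
        unfolding f_def dist_norm using w1[of t]
        by (simp add: scaleR_diff_right[symmetric])
      also have "\<dots> \<le> (1 / w t) * (D * exp (2*K*t) / 2 - D / 2)"
        using n w1[of t] by (intro mult_left_mono) auto
      also have "\<dots> = D / 2 - D / (2 * exp (2*K*t))"
        using True unfolding w_def by (simp add: field_simps)
      also have "\<dots> \<le> D / 2"
        using D0 by simp
      finally show ?thesis unfolding Qap D_def by simp
    qed
  qed
  obtain \<psi> where fixp: "Q \<psi> = \<psi>"
    using banach_fix_type[of "1/2" Q] contr by auto
  have psi: "apply_bcontfun \<psi> t = f \<psi> t" for t using fixp Qap by metis
  define z where "z t = w t *\<^sub>R apply_bcontfun \<psi> t" for t
  have hz: "hh \<psi> = (\<lambda>s. G (z s))" unfolding hh_def z_def by simp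
  have zeq: "z t = z0 + integral {0..t} (\<lambda>s. G (z s))" if "t \<ge> 0" for t
  proof -
    have "z t = w t *\<^sub>R f \<psi> t" by (simp only: z_def psi)
    also have "\<dots> = z0 + integral {0..t} (hh \<psi>)" unfolding f_def using w1[of t] by simp
    finally show ?thesis by (simp only: hz)
  qed
  have "z 0 = z0" using zeq[of 0] by simp
  moreover have "(z has_vector_derivative G (z t)) (at t within {0..})" if "t \<ge> 0" for t
  proof -
    have "((\<lambda>t. z0 + integral {0..t} (\<lambda>s. G (z s))) has_vector_derivative G (z t)) (at t within {0..})"
      using indef_deriv[OF hhc[of \<psi>, unfolded hz] that] by (auto intro!: derivative_eq_intros)
    then show ?thesis
      by (rule has_vector_derivative_transform_within[where d=1]) (auto simp: that zeq)
  qed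
  ultimately show ?thesis by blast
qed

lemma mono_within:
  fixes f f' :: "real \<Rightarrow> real"
  assumes a: "0 \<le> a" and ab: "a \<le> b"
    and d: "\<And>t. t \<in> {a..b} \<Longrightarrow> (f has_real_derivative f' t) (at t within {0..})"
    and n: "\<And>t. t \<in> {a..b} \<Longrightarrow> f' t \<le> 0"
  shows "f b \<le> f a"
proof (rule DERIV_nonpos_imp_decreasing_open[OF ab])
  fix x assume x: "a < x" "x < b"
  then have "(f has_real_derivative f' x) (at x within {0<..})"
  proof -
    have xi: "x \<in> {a..b}" using x by auto
    have sub: "{0<..} \<subseteq> {0::real..}" by auto
    show ?thesis by (rule DERIV_subset[OF d[OF xi] sub])
  qed
  moreover have "at x within {0<..} = at x" using x a by (intro at_within_open) auto
  ultimately show "\<exists>y. (f has_real_derivative y) (at x) \<and> y \<le> 0" using n[of x] x by auto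
next
  show "continuous_on {a..b} f"
    unfolding continuous_on_eq_continuous_within
  proof
    fix t assume t: "t \<in> {a..b}"
    have "continuous (at t within {0..}) f" using DERIV_continuous[OF d[OF t]] .
    then show "continuous (at t within {a..b}) f"
      by (rule continuous_within_subset) (use a in auto)
  qed
qed

lemma pos_lower:
  fixes g :: "'a::topological_space \<Rightarrow> real"
  assumes "compact S" "continuous_on S g" "\<And>x. x \<in> S \<Longrightarrow> g x > 0"
  shows "\<exists>c>0. \<forall>x\<in>S. c < g x"
proof (cases "S = {}")
  case True then show ?thesis by (auto intro: exI[of _ 1])
next
  case False
  obtain x0 where x0: "x0 \<in> S" "\<And>y. y \<in> S \<Longrightarrow> g x0 \<le> g y"
    using continuous_attains_inf[OF assms(1) False assms(2)] by blast
  have "g x0 > 0" using assms(3) x0(1) by simp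
  then show ?thesis using x0 by (intro exI[of _ "g x0 / 2"]) force
qed

lemma cutoff_lip:
  fixes F :: "'a::metric_space \<Rightarrow> 'b::real_normed_vector"
  assumes LF: "L-lipschitz_on A F" and MF: "\<And>x. x \<in> A \<Longrightarrow> norm (F x) \<le> M" and M0: "M \<ge> 0"
    and Lp: "Lp-lipschitz_on UNIV p" and p0: "\<And>x. x \<notin> A \<Longrightarrow> p x = 0"
    and p01: "\<And>x. 0 \<le> p x \<and> p x \<le> 1"
  shows "(L + Lp*M)-lipschitz_on UNIV (\<lambda>x. p x *\<^sub>R F x)"
proof (rule lipschitz_onI)
  have L0: "L \<ge> 0" using lipschitz_on_nonneg[OF LF] .
  have Lp0: "Lp \<ge> 0" using lipschitz_on_nonneg[OF Lp] .
  show "0 \<le> L + Lp * M" using L0 Lp0 M0 by simp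
  have key: "dist (p x *\<^sub>R F x) (p y *\<^sub>R F y) \<le> (L + Lp*M) * dist x y" if x: "x \<in> A" for x y
  proof -
    have pd: "\<bar>p x - p y\<bar> \<le> Lp * dist x y" using lipschitz_onD[OF Lp, of x y] by (simp add: dist_real_def)
    have d0: "dist x y \<ge> 0" by simp
    show ?thesis
    proof (cases "y \<in> A")
      case True
      have eq: "p x *\<^sub>R F x - p y *\<^sub>R F y = (p x - p y) *\<^sub>R F x + p y *\<^sub>R (F x - F y)"
        by (simp add: algebra_simps)
      have a: "norm ((p x - p y) *\<^sub>R F x) \<le> (Lp * dist x y) * M"
        using pd MF[OF x] by (simp add: mult_mono)
      have b: "norm (p y *\<^sub>R (F x - F y)) \<le> 1 * (L * dist x y)"
      proof -
        have "norm (p y *\<^sub>R (F x - F y)) = \<bar>p y\<bar> * norm (F x - F y)" by simp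
        also have "\<dots> \<le> 1 * (L * dist x y)"
          using p01[of y] lipschitz_onD[OF LF x True] L0 by (intro mult_mono) (auto simp: dist_norm)
        finally show ?thesis .
      qed
      have "norm (p x *\<^sub>R F x - p y *\<^sub>R F y) \<le> (Lp * dist x y) * M + 1 * (L * dist x y)"
        unfolding eq using norm_triangle_le[OF add_mono[OF a b]] by simp
      then show ?thesis by (simp add: dist_norm algebra_simps)
    next
      case False
      then have py: "p y = 0" by (rule p0)
      have "norm (p x *\<^sub>R F x) = \<bar>p x - p y\<bar> * norm (F x)" using py by simp
      also have "\<dots> \<le> (Lp * dist x y) * M" using pd MF[OF x] by (simp add: mult_mono)
      also have "\<dots> \<le> (L + Lp*M) * dist x y" using L0 d0 by (simp add: algebra_simps)
      finally show ?thesis using py by (simp add: dist_norm)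
    qed
  qed
  fix x y
  show "dist (p x *\<^sub>R F x) (p y *\<^sub>R F y) \<le> (L + Lp*M) * dist x y"
  proof (cases "x \<in> A")
    case True then show ?thesis by (rule key)
  next
    case False
    show ?thesis
    proof (cases "y \<in> A")
      case True then show ?thesis using key[OF True, of x] by (simp add: dist_commute)
    next
      case False then show ?thesis using p0 \<open>x \<notin> A\<close> L0 Lp0 M0 by simp
    qed
  qed
qed

lemma clamp_lip: "\<bar>max 0 (min 1 a) - max 0 (min 1 b)\<bar> \<le> \<bar>a - b\<bar>" for a b :: real
  by (auto simp: max_def min_def abs_if)

lemma phi_lip:
  fixes Z :: "'a::metric_space set" and r1 r2 :: real
  assumes "r1 < r2"
  shows "(1 / (r2 - r1))-lipschitz_on UNIV (\<lambda>z. max 0 (min 1 ((r2 - infdist z Z) / (r2 - r1))))"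
proof (rule lipschitz_onI)
  fix x y :: 'a
  have "\<bar>max 0 (min 1 ((r2 - infdist x Z) / (r2 - r1))) - max 0 (min 1 ((r2 - infdist y Z) / (r2 - r1)))\<bar>
      \<le> \<bar>(r2 - infdist x Z) / (r2 - r1) - (r2 - infdist y Z) / (r2 - r1)\<bar>" by (rule clamp_lip)
  also have "\<dots> = \<bar>infdist x Z - infdist y Z\<bar> / (r2 - r1)"
    using assms by (simp add: diff_divide_distrib[symmetric] abs_minus_commute)
  also have "\<dots> \<le> dist x y / (r2 - r1)"
    using assms infdist_triangle_abs[of x Z y] by (simp add: divide_right_mono)
  finally show "dist (max 0 (min 1 ((r2 - infdist x Z) / (r2 - r1)))) (max 0 (min 1 ((r2 - infdist y Z) / (r2 - r1))))
     \<le> 1 / (r2 - r1) * dist x y" by (simp add: dist_real_def)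
qed (use assms in simp)

lemma F_LB:
  fixes U dU ddU :: "real \<Rightarrow> real" and a b :: real
  assumes U_deriv: "\<And>r. r > 0 \<Longrightarrow> (U has_real_derivative dU r) (at r)"
    and dU_deriv: "\<And>r. r > 0 \<Longrightarrow> (dU has_real_derivative ddU r) (at r)"
    and ddU_cont: "continuous_on {0<..} ddU"
    and a: "0 < a"
  shows "LB {z::state. a \<le> norm (fst z) \<and> norm (fst z) \<le> b \<and> norm (snd z) \<le> b}
            (ctrl_field U dU k1 k2 E0 L0)"
proof -
  define S where "S = {z::state. a \<le> norm (fst z) \<and> norm (fst z) \<le> b \<and> norm (snd z) \<le> b}"
  have bS: "bounded S"
    by (rule bounded_subset[of "cball 0 b \<times> cball 0 b"]) (auto simp: S_def intro!: bounded_Times)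
  have X: "LB S fst" by (rule LB_linear[OF bounded_linear_fst bS])
  have V: "LB S snd" by (rule LB_linear[OF bounded_linear_snd bS])
  have nx: "LB S (\<lambda>z. norm (fst z))"
    by (rule LB_comp[OF LB_norm[OF bounded_linear_image[OF bS bounded_linear_fst]] X]) simp
  have nxS: "(\<lambda>z. norm (fst z)) ` S \<subseteq> {a..b}" by (auto simp: S_def)
  have dUc: "continuous_on {a..b} dU"
  proof (rule continuous_at_imp_continuous_on, rule ballI)
    fix x assume "x \<in> {a..b}"
    then have "x > 0" using a by auto
    then show "isCont dU x" using DERIV_isCont[OF dU_deriv] by blast
  qed
  have ddUc: "continuous_on {a..b} ddU"
    by (rule continuous_on_subset[OF ddU_cont]) (use a in auto)
  have q1: "LB {a..b} (\<lambda>r. dU r / r)"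
  proof (rule LB_deriv1)
    fix r assume "r \<in> {a..b}"
    then have r: "r > 0" using a by auto
    show "((\<lambda>r. dU r / r) has_real_derivative (ddU r * r - dU r) / r\<^sup>2) (at r)"
      using dU_deriv[OF r] r by (auto intro!: derivative_eq_intros simp: power2_eq_square field_simps)
  next
    show "continuous_on {a..b} (\<lambda>r. (ddU r * r - dU r) / r\<^sup>2)"
      using a by (intro continuous_intros dUc ddUc) auto
  qed
  have u1: "LB {a..b} U"
  proof (rule LB_deriv1)
    fix r assume "r \<in> {a..b}"
    then show "(U has_real_derivative dU r) (at r)" using a U_deriv by auto
  qed (rule dUc)
  have q: "LB S (\<lambda>z. dU (norm (fst z)) / norm (fst z))" by (rule LB_comp[OF q1 nx nxS])
  have u: "LB S (\<lambda>z. U (norm (fst z)))" by (rule LB_comp[OF u1 nx nxS])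
  have e: "LB S (\<lambda>z. energy U z - E0)"
  proof -
    have "LB S (\<lambda>z. (snd z \<bullet> snd z) * (1/2) + U (norm (fst z)) - E0)"
      by (intro LB_diff LB_add LB_const u LB_bil[OF bounded_bilinear_mult] LB_bil[OF bounded_bilinear_inner] V)
    moreover have "(\<lambda>z. (snd z \<bullet> snd z) * (1/2) + U (norm (fst z)) - E0) = (\<lambda>z. energy U z - E0)"
      by (auto simp: fun_eq_iff energy_def power2_norm_eq_inner)
    ultimately show ?thesis by simp
  qed
  have l: "LB S (\<lambda>z. angmom z - L0)"
    unfolding angmom_def by (intro LB_diff LB_const LB_bil[OF bb_cross] X V)
  have "LB S (\<lambda>z. (snd z - ((k1 * (energy U z - E0)) * (dU (norm (fst z)) / norm (fst z))) *\<^sub>R fst z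
                     - k2 *\<^sub>R cross3 (snd z) (angmom z - L0),
                 - (dU (norm (fst z)) / norm (fst z)) *\<^sub>R fst z - (k1 * (energy U z - E0)) *\<^sub>R snd z
                     - k2 *\<^sub>R cross3 (angmom z - L0) (fst z)))"
    by (intro LB_Pair LB_diff LB_minus LB_bil[OF bounded_bilinear_scaleR] LB_bil[OF bounded_bilinear_mult]
        LB_bil[OF bb_cross] LB_const X V q e l)
  moreover have "(\<lambda>z. (snd z - ((k1 * (energy U z - E0)) * (dU (norm (fst z)) / norm (fst z))) *\<^sub>R fst z
                     - k2 *\<^sub>R cross3 (snd z) (angmom z - L0),
                 - (dU (norm (fst z)) / norm (fst z)) *\<^sub>R fst z - (k1 * (energy U z - E0)) *\<^sub>R snd z
                     - k2 *\<^sub>R cross3 (angmom z - L0) (fst z))) = ctrl_field U dU k1 k2 E0 L0"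
    by (auto simp: fun_eq_iff ctrl_field_def Let_def)
  ultimately show ?thesis unfolding S_def by simp
qed

lemma cross_cross_expand: "cross3 (a::real^3) (cross3 b c) = (a \<bullet> c) *\<^sub>R b - (a \<bullet> b) *\<^sub>R c"
  by (simp add: cross3_simps forall_3)

lemma alg_nocrit:
  fixes x v mu :: "real^3" and lam d r :: real
  assumes x: "x \<noteq> 0" and r: "r = norm x"
    and e1: "(lam * d / r) *\<^sub>R x + cross3 v mu = 0"
    and e2: "lam *\<^sub>R v + cross3 mu x = 0"
    and L: "cross3 x v \<noteq> 0"
  shows "(lam = 0 \<and> mu = 0) \<or> ((norm v)\<^sup>2 = r * d \<and> (norm (cross3 x v))\<^sup>2 = r ^ 3 * d)"
proof (cases "lam = 0")
  case True
  then have a: "cross3 v mu = 0" and b: "cross3 mu x = 0" using e1 e2 by auto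
  have "mu = 0"
  proof (rule ccontr)
    assume mu: "mu \<noteq> 0"
    have xm: "cross3 x mu = 0" using b cross_skew[of mu x] by simp
    have vm: "cross3 v mu = 0" using a .
    have hx: "(mu \<bullet> mu) *\<^sub>R x = (mu \<bullet> x) *\<^sub>R mu"
      using cross_cross_expand[of mu x mu] xm by simp
    have hv: "(mu \<bullet> mu) *\<^sub>R v = (mu \<bullet> v) *\<^sub>R mu"
      using cross_cross_expand[of mu v mu] vm by simp
    have "((mu \<bullet> mu) * (mu \<bullet> mu)) *\<^sub>R cross3 x v = cross3 ((mu \<bullet> mu) *\<^sub>R x) ((mu \<bullet> mu) *\<^sub>R v)"
      by (simp add: cross_mult_left cross_mult_right)
    also have "\<dots> = 0" unfolding hx hv by (simp add: cross_mult_left cross_mult_right)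
    finally have "cross3 x v = 0" using mu by simp
    then show False using L by simp
  qed
  then show ?thesis using True by simp
next
  case False
  define nu where "nu = (1/lam) *\<^sub>R mu"
  have mu: "mu = lam *\<^sub>R nu" using False by (simp add: nu_def)
  have v: "v = cross3 x nu"
  proof -
    have "lam *\<^sub>R v = lam *\<^sub>R cross3 x nu"
      using e2 unfolding mu by (simp add: cross_mult_left cross_mult_right cross_skew[of nu x] eq_neg_iff_add_eq_0 add.commute)
    then show ?thesis using False by simp
  qed
  have "lam *\<^sub>R ((d / r) *\<^sub>R x + cross3 v nu) = 0"
    using e1 unfolding mu by (simp add: cross_mult_right algebra_simps)
  then have e3: "(d / r) *\<^sub>R x + cross3 v nu = 0" using False by simp
  have vn: "cross3 v nu = (nu \<bullet> x) *\<^sub>R nu - (nu \<bullet> nu) *\<^sub>R x"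
    unfolding v using cross_cross_expand[of nu x nu] cross_skew[of "cross3 x nu" nu] by simp
  have e4: "(d / r - nu \<bullet> nu) *\<^sub>R x + (nu \<bullet> x) *\<^sub>R nu = 0"
    using e3 unfolding vn by (simp add: algebra_simps)
  have nx: "nu \<bullet> x = 0"
  proof (rule ccontr)
    assume h: "nu \<bullet> x \<noteq> 0"
    have "cross3 x ((d / r - nu \<bullet> nu) *\<^sub>R x + (nu \<bullet> x) *\<^sub>R nu) = 0" using e4 by simp
    then have "(nu \<bullet> x) *\<^sub>R cross3 x nu = 0"
      by (simp add: cross_add_right cross_mult_right)
    then have "cross3 x nu = 0" using h by simp
    then have "v = 0" using v by simp
    then show False using L by simp
  qed
  have rpos: "r > 0" using x r by simp
  have dn: "d / r = nu \<bullet> nu"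
  proof -
    have "(d / r - nu \<bullet> nu) *\<^sub>R x = 0" using e4 nx by simp
    then show ?thesis using x by simp
  qed
  have d: "d = r * (nu \<bullet> nu)" using dn rpos by (simp add: field_simps)
  have "(norm v)\<^sup>2 = (norm x * norm nu)\<^sup>2"
    using norm_cross_dot[of x nu] nx unfolding v by (simp add: inner_commute)
  also have "\<dots> = r * d" unfolding d r by (simp add: power2_eq_square power2_norm_eq_inner[symmetric])
  finally have n1: "(norm v)\<^sup>2 = r * d" .
  have "cross3 x v = - (x \<bullet> x) *\<^sub>R nu"
    unfolding v cross_cross_expand using nx by (simp add: inner_commute)
  then have "norm (cross3 x v) = \<bar>x \<bullet> x\<bar> * norm nu" by simp
  then have "(norm (cross3 x v))\<^sup>2 = (x \<bullet> x)\<^sup>2 * (nu \<bullet> nu)"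
    by (simp add: power_mult_distrib power2_norm_eq_inner)
  also have "\<dots> = r ^ 3 * d" unfolding d r by (simp add: power2_norm_eq_inner[symmetric] power2_eq_square power3_eq_cube)
  finally show ?thesis using n1 by simp
qed

definition Phi :: "(real\<Rightarrow>real) \<Rightarrow> state \<Rightarrow> real \<times> (real^3) \<Rightarrow> state" where
 "Phi dU z w = ((fst w * dU (norm (fst z)) / norm (fst z)) *\<^sub>R fst z + cross3 (snd z) (snd w),
                fst w *\<^sub>R snd z + cross3 (snd w) (fst z))"

lemma grad_Phi: "gradV U dU k1 k2 E0 L0 z = Phi dU z (k1 * (energy U z - E0), k2 *\<^sub>R (angmom z - L0))"
  by (simp add: gradV_def Phi_def Let_def cross_mult_left cross_mult_right)

lemma Phi_scale: "Phi dU z (c *\<^sub>R w) = c *\<^sub>R Phi dU z w"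
  by (simp add: Phi_def cross_mult_left cross_mult_right algebra_simps)

lemma nocrit_point:
  assumes y: "fst y \<noteq> 0" and eE: "energy U y = E0" and eL: "angmom y = L0" and L0: "L0 \<noteq> 0"
    and nocrit: "\<not> (\<exists>r>0. E0 = r * dU r / 2 + U r \<and> (norm L0)\<^sup>2 = r ^ 3 * dU r)"
    and P: "Phi dU y w = 0"
  shows "w = 0"
proof -
  have e1: "(fst w * dU (norm (fst y)) / norm (fst y)) *\<^sub>R fst y + cross3 (snd y) (snd w) = 0"
    and e2: "fst w *\<^sub>R snd y + cross3 (snd w) (fst y) = 0"
    using P by (auto simp: Phi_def prod_eq_iff)
  have L: "cross3 (fst y) (snd y) \<noteq> 0" using eL L0 by (simp add: angmom_def)
  from alg_nocrit[OF y refl e1 e2 L]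
  consider "fst w = 0 \<and> snd w = 0"
    | "(norm (snd y))\<^sup>2 = norm (fst y) * dU (norm (fst y)) \<and>
       (norm (cross3 (fst y) (snd y)))\<^sup>2 = norm (fst y) ^ 3 * dU (norm (fst y))" by blast
  then show ?thesis
  proof cases
    case 1 then show ?thesis by (simp add: prod_eq_iff)
  next
    case 2
    have "E0 = norm (fst y) * dU (norm (fst y)) / 2 + U (norm (fst y))"
      using eE 2 by (simp add: energy_def)
    moreover have "(norm L0)\<^sup>2 = norm (fst y) ^ 3 * dU (norm (fst y))"
      using eL 2 by (simp add: angmom_def)
    ultimately show ?thesis using nocrit y by auto
  qed
qed

lemma nocrit_nbhd:
  assumes Zc: "compact Z" and Zne: "Z \<noteq> {}"
    and Zsub: "\<And>y. y \<in> Z \<Longrightarrow> fst y \<noteq> 0 \<and> energy U y = E0 \<and> angmom y = L0"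
    and L0: "L0 \<noteq> 0"
    and nocrit: "\<not> (\<exists>r>0. E0 = r * dU r / 2 + U r \<and> (norm L0)\<^sup>2 = r ^ 3 * dU r)"
    and dUc: "continuous_on {0<..} dU"
  shows "\<exists>\<epsilon>>0. \<forall>z w. fst z \<noteq> 0 \<longrightarrow> infdist z Z < \<epsilon> \<longrightarrow> Phi dU z w = 0 \<longrightarrow> w = 0"
proof (rule ccontr)
  assume "\<not> ?thesis"
  then have h: "\<forall>\<epsilon>>0. \<exists>z w. fst z \<noteq> 0 \<and> infdist z Z < \<epsilon> \<and> Phi dU z w = 0 \<and> w \<noteq> 0" by auto
  have "\<forall>n::nat. \<exists>z w y. y \<in> Z \<and> dist z y < 1 / real (Suc n) \<and> Phi dU z w = 0 \<and> w \<in> sphere 0 1"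
  proof
    fix n :: nat
    obtain z w where zw: "fst z \<noteq> 0" "infdist z Z < 1 / real (Suc n)" "Phi dU z w = 0" "w \<noteq> 0"
      using h[rule_format, of "1 / real (Suc n)"] by auto
    obtain y where y: "y \<in> Z" "infdist z Z = dist z y"
      using infdist_attains_inf[OF compact_imp_closed[OF Zc] Zne] by metis
    have "Phi dU z ((1 / norm w) *\<^sub>R w) = 0" using zw(3) by (simp add: Phi_scale)
    moreover have "(1 / norm w) *\<^sub>R w \<in> sphere 0 1" using zw(4) by simp
    ultimately show "\<exists>z w y. y \<in> Z \<and> dist z y < 1 / real (Suc n) \<and> Phi dU z w = 0 \<and> w \<in> sphere 0 1"
      using y zw(2) by metis
  qed
  then obtain z w y where zwy: "\<And>n. y n \<in> Z" "\<And>n. dist (z n) (y n) < 1 / real (Suc n)"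
    "\<And>n. Phi dU (z n) (w n) = 0" "\<And>n. w n \<in> sphere 0 1"
    by metis
  have "compact (Z \<times> sphere (0::real \<times> (real^3)) 1)" by (intro compact_Times Zc compact_sphere)
  then have sc: "seq_compact (Z \<times> sphere (0::real \<times> (real^3)) 1)" by (rule compact_imp_seq_compact)
  have "\<forall>n. (\<lambda>n. (y n, w n)) n \<in> Z \<times> sphere 0 1" using zwy(1,4) by simp
  from seq_compactE[OF sc this]
  obtain l r where l: "l \<in> Z \<times> sphere 0 1" "strict_mono r" "((\<lambda>n. (y n, w n)) \<circ> r) \<longlonglongrightarrow> l"
    by blast
  define ys where "ys = fst l"
  define ws where "ws = snd l"
  have ys: "ys \<in> Z" and ws: "ws \<in> sphere 0 1" using l(1) by (auto simp: ys_def ws_def)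
  have yl: "(\<lambda>n. y (r n)) \<longlonglongrightarrow> ys" using tendsto_fst[OF l(3)] by (simp add: ys_def o_def)
  have wl: "(\<lambda>n. w (r n)) \<longlonglongrightarrow> ws" using tendsto_snd[OF l(3)] by (simp add: ws_def o_def)
  have d0: "(\<lambda>n. z (r n) - y (r n)) \<longlonglongrightarrow> 0"
  proof (rule Lim_null_comparison[OF _ LIMSEQ_inverse_real_of_nat])
    show "\<forall>\<^sub>F n in sequentially. norm (z (r n) - y (r n)) \<le> inverse (real (Suc n))"
    proof (rule always_eventually, rule allI)
      fix n
      have "n \<le> r n" using seq_suble[OF l(2)] by blast
      then have "1 / real (Suc (r n)) \<le> inverse (real (Suc n))"
        by (simp add: divide_simps)
      then show "norm (z (r n) - y (r n)) \<le> inverse (real (Suc n))"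
        using zwy(2)[of "r n"] by (simp add: dist_norm)
    qed
  qed
  have zl: "(\<lambda>n. z (r n)) \<longlonglongrightarrow> ys"
    using tendsto_add[OF yl d0] by simp
  have yZ: "fst ys \<noteq> 0" using Zsub[OF ys] by simp
  have fz: "(\<lambda>n. fst (z (r n))) \<longlonglongrightarrow> fst ys" by (intro tendsto_intros zl)
  have sz: "(\<lambda>n. snd (z (r n))) \<longlonglongrightarrow> snd ys" by (intro tendsto_intros zl)
  have nz: "(\<lambda>n. norm (fst (z (r n)))) \<longlonglongrightarrow> norm (fst ys)" by (intro tendsto_intros fz)
  have "isCont dU (norm (fst ys))"
    using dUc yZ by (simp add: continuous_on_eq_continuous_at)
  then have dz: "(\<lambda>n. dU (norm (fst (z (r n))))) \<longlonglongrightarrow> dU (norm (fst ys))"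
    using isCont_tendsto_compose nz by blast
  have fw: "(\<lambda>n. fst (w (r n))) \<longlonglongrightarrow> fst ws" by (intro tendsto_intros wl)
  have sw: "(\<lambda>n. snd (w (r n))) \<longlonglongrightarrow> snd ws" by (intro tendsto_intros wl)
  have c1: "(\<lambda>n. cross3 (snd (z (r n))) (snd (w (r n)))) \<longlonglongrightarrow> cross3 (snd ys) (snd ws)"
    by (rule bounded_bilinear.tendsto[OF bb_cross sz sw])
  have c2: "(\<lambda>n. cross3 (snd (w (r n))) (fst (z (r n)))) \<longlonglongrightarrow> cross3 (snd ws) (fst ys)"
    by (rule bounded_bilinear.tendsto[OF bb_cross sw fz])
  have "(\<lambda>n. Phi dU (z (r n)) (w (r n))) \<longlonglongrightarrow> Phi dU ys ws"
    unfolding Phi_def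
    by (intro tendsto_intros fw dz nz fz c1 c2 sz) (use yZ in simp)
  moreover have "(\<lambda>n. Phi dU (z (r n)) (w (r n))) = (\<lambda>n. 0)" using zwy(3) by simp
  ultimately have "Phi dU ys ws = 0" using LIMSEQ_unique tendsto_const by metis
  then have "ws = 0" using nocrit_point[OF yZ _ _ L0 nocrit] Zsub[OF ys] by blast
  then show False using ws by simp
qed

theorem theorem7:
  fixes U dU ddU :: "real \<Rightarrow> real"
    and x0 v0 :: "real^3" and k1 k2 :: real
  assumes U_deriv: "\<And>r. r > 0 \<Longrightarrow> (U has_real_derivative dU r) (at r)"
    and dU_deriv: "\<And>r. r > 0 \<Longrightarrow> (dU has_real_derivative ddU r) (at r)"
    and ddU_cont: "continuous_on {0<..} ddU"
    and x0: "x0 \<noteq> 0"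
    and L0ne: "cross3 x0 v0 \<noteq> 0"
    and k1: "k1 > 0" and k2: "k2 > 0"
    and cpt0: "compact {z \<in> phase.
                 lyap U k1 k2 (energy U (x0, v0)) (angmom (x0, v0)) z = 0}"
    and nocrit: "\<not> (\<exists>r>0. energy U (x0, v0) = r * dU r / 2 + U r \<and>
                        (norm (angmom (x0, v0)))\<^sup>2 = r ^ 3 * dU r)"
  shows "\<exists>N c. open N \<and> N \<subseteq> phase \<and>
           {z \<in> phase. lyap U k1 k2 (energy U (x0, v0)) (angmom (x0, v0)) z = 0} \<subseteq> N \<and>
           c > 0 \<and>
           compact {z \<in> N. lyap U k1 k2 (energy U (x0, v0)) (angmom (x0, v0)) z \<le> c} \<and>
           (\<forall>z \<in> {z \<in> N. lyap U k1 k2 (energy U (x0, v0)) (angmom (x0, v0)) z \<le> c}.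
              (lyap U k1 k2 (energy U (x0, v0)) (angmom (x0, v0)) has_derivative (\<lambda>h. 0)) (at z)
              \<longrightarrow> lyap U k1 k2 (energy U (x0, v0)) (angmom (x0, v0)) z = 0) \<and>
           (\<forall>z0 \<in> {z \<in> N. lyap U k1 k2 (energy U (x0, v0)) (angmom (x0, v0)) z \<le> c}.
              \<exists>z. z 0 = z0 \<and> (\<forall>t\<ge>0. z t \<in> phase \<and>
                 (z has_vector_derivative
                    ctrl_field U dU k1 k2 (energy U (x0, v0)) (angmom (x0, v0)) (z t))
                   (at t within {0..}))) \<and>
           (\<forall>z. z 0 \<in> {z \<in> N. lyap U k1 k2 (energy U (x0, v0)) (angmom (x0, v0)) z \<le> c} \<and>
                (\<forall>t\<ge>0. z t \<in> phase \<and>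
                   (z has_vector_derivative
                      ctrl_field U dU k1 k2 (energy U (x0, v0)) (angmom (x0, v0)) (z t))
                     (at t within {0..}))
              \<longrightarrow> (\<forall>t\<ge>0. z t \<in> {z \<in> N. lyap U k1 k2 (energy U (x0, v0)) (angmom (x0, v0)) z \<le> c}) \<and>
                  ((\<lambda>t. infdist (z t) {z \<in> phase. energy U z = energy U (x0, v0) \<and>
                                               angmom z = angmom (x0, v0)})
                     \<longlongrightarrow> 0) at_top)"
proof -
  define E0 where "E0 = energy U (x0, v0)"
  define L0 where "L0 = angmom (x0, v0)"
  define V where "V = lyap U k1 k2 E0 L0"
  define F where "F = ctrl_field U dU k1 k2 E0 L0"
  define gr where "gr = gradV U dU k1 k2 E0 L0"
  define Z where "Z = {z \<in> phase. V z = 0}"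
  have L0ne': "L0 \<noteq> 0" using L0ne by (simp add: L0_def angmom_def)
  have nocrit': "\<not> (\<exists>r>0. E0 = r * dU r / 2 + U r \<and> (norm L0)\<^sup>2 = r ^ 3 * dU r)"
    using nocrit unfolding E0_def L0_def .
  have openphase: "open phase" unfolding phase_def by (intro open_Collect_neq continuous_intros)
  have Uc: "continuous_on {0<..} U"
    by (rule continuous_at_imp_continuous_on) (use DERIV_isCont[OF U_deriv] in auto)
  have dUc: "continuous_on {0<..} dU"
    by (rule continuous_at_imp_continuous_on) (use DERIV_isCont[OF dU_deriv] in auto)
  have Vd: "(V has_derivative (\<lambda>h. gr z \<bullet> h)) (at z)" if "z \<in> phase" for z
    unfolding V_def gr_def using that by (intro lyap_deriv U_deriv) (auto simp: phase_def)
  have Vc: "continuous_on phase V"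
    by (rule continuous_at_imp_continuous_on) (use Vd has_derivative_continuous in blast)
  have uN: "continuous_on phase (\<lambda>z. U (norm (fst z)))"
    by (rule continuous_on_compose2[OF Uc]) (auto intro!: continuous_intros simp: phase_def)
  have dN: "continuous_on phase (\<lambda>z. dU (norm (fst z)))"
    by (rule continuous_on_compose2[OF dUc]) (auto intro!: continuous_intros simp: phase_def)
  have grc: "continuous_on phase gr"
    unfolding gr_def gradV_def Let_def energy_def angmom_def
    by (intro continuous_intros continuous_on_cross uN dN) (auto simp: phase_def)
  have Vge: "V z \<ge> 0" for z unfolding V_def lyap_def using k1 k2 by simp
  have V0iff: "V z = 0 \<longleftrightarrow> energy U z = E0 \<and> angmom z = L0" for z
  proof -
    have a: "k1 / 2 * (energy U z - E0)\<^sup>2 \<ge> 0" using k1 by simp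
    have b: "k2 / 2 * (norm (angmom z - L0))\<^sup>2 \<ge> 0" using k2 by simp
    show ?thesis unfolding V_def lyap_def using a b k1 k2 by (auto simp: add_nonneg_eq_0_iff)
  qed
  have Zeq: "{z \<in> phase. energy U z = E0 \<and> angmom z = L0} = Z" unfolding Z_def using V0iff by auto
  have Zc: "compact Z" using cpt0 unfolding Z_def V_def E0_def L0_def .
  have x0Z: "(x0, v0) \<in> Z" unfolding Z_def using x0 V0iff by (simp add: phase_def E0_def L0_def)
  have Zne: "Z \<noteq> {}" using x0Z by auto
  have Zsub: "fst y \<noteq> 0 \<and> energy U y = E0 \<and> angmom y = L0" if "y \<in> Z" for y
    using that V0iff unfolding Z_def phase_def by auto
  obtain en where en: "en > 0" "\<And>z w. fst z \<noteq> 0 \<Longrightarrow> infdist z Z < en \<Longrightarrow> Phi dU z w = 0 \<Longrightarrow> w = 0"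
    using nocrit_nbhd[OF Zc Zne Zsub L0ne' nocrit' dUc] by blast
  have critV: "V z = 0" if "z \<in> phase" "infdist z Z < en" "gr z = 0" for z
  proof -
    have "Phi dU z (k1 * (energy U z - E0), k2 *\<^sub>R (angmom z - L0)) = 0"
      using that(3) grad_Phi unfolding gr_def by metis
    then have "(k1 * (energy U z - E0), k2 *\<^sub>R (angmom z - L0)) = 0"
      using en(2) that(1,2) unfolding phase_def by blast
    then show ?thesis using k1 k2 V0iff by (simp add: prod_eq_iff)
  qed
  have "\<exists>x\<in>Z. \<forall>y\<in>Z. norm (fst x) \<le> norm (fst y)"
    by (rule continuous_attains_inf[OF Zc Zne]) (intro continuous_intros)
  then obtain yb where yb: "yb \<in> Z" "\<And>y. y \<in> Z \<Longrightarrow> norm (fst yb) \<le> norm (fst y)"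
    by blast
  define m0 where "m0 = norm (fst yb)"
  have m0: "m0 > 0" using Zsub[OF yb(1)] by (simp add: m0_def)
  obtain R where R: "\<And>y. y \<in> Z \<Longrightarrow> norm y \<le> R"
    using compact_imp_bounded[OF Zc] bounded_iff by metis
  have near: "m0 - r' \<le> norm (fst z) \<and> norm (fst z) \<le> R + r' \<and> norm (snd z) \<le> R + r'"
    if "infdist z Z \<le> r'" for z r'
  proof -
    obtain y where y: "y \<in> Z" "infdist z Z = dist z y"
      using infdist_attains_inf[OF compact_imp_closed[OF Zc] Zne] by metis
    have d: "norm (z - y) \<le> r'" using y that by (simp add: dist_norm)
    have f1: "norm (fst z - fst y) \<le> norm (z - y)" using norm_fst_le[of "fst (z - y)" "snd (z - y)"] unfolding prod.collapse by simp
    have f2: "norm (snd z - snd y) \<le> norm (z - y)" using norm_snd_le[of "snd (z - y)" "fst (z - y)"] unfolding prod.collapse by simp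
    have g1: "norm (fst y) \<le> norm y" using norm_fst_le[of "fst y" "snd y"] unfolding prod.collapse by simp
    have g2: "norm (snd y) \<le> norm y" using norm_snd_le[of "snd y" "fst y"] unfolding prod.collapse by simp
    have "m0 \<le> norm (fst y)" using yb(2)[OF y(1)] by (simp add: m0_def)
    moreover have "norm (fst y) \<le> norm (fst z) + norm (fst z - fst y)" by (metis norm_triangle_sub norm_minus_commute)
    moreover have "norm (fst z) \<le> norm (fst y) + norm (fst z - fst y)" by (metis norm_triangle_sub)
    moreover have "norm (snd z) \<le> norm (snd y) + norm (snd z - snd y)" by (metis norm_triangle_sub)
    ultimately show ?thesis using d f1 f2 g1 g2 R[OF y(1)] by linarith
  qed
  define m1 where "m1 = min en m0"
  have m1: "m1 > 0" "m1 \<le> en" "m1 \<le> m0" using en m0 by (auto simp: m1_def)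
  define \<rho> where "\<rho> = m1 / 4"
  define \<rho>1 where "\<rho>1 = m1 / 2"
  define \<rho>2 where "\<rho>2 = 3 * m1 / 4"
  have rhos: "0 < \<rho>" "\<rho> < \<rho>1" "\<rho>1 < \<rho>2" "\<rho>2 < m0" "\<rho> < en" "\<rho>2 \<le> 3 * m0 / 4"
    using m1 by (auto simp: \<rho>_def \<rho>1_def \<rho>2_def)
  have inph: "z \<in> phase" if "infdist z Z \<le> \<rho>2" for z
    using near[OF that] rhos by (auto simp: phase_def)
  have Cc: "compact {z. infdist z Z \<le> r}" if "r > 0" for r
    by (rule compact_infdist_le[OF Zne Zc that])
  define S where "S = {z. infdist z Z = \<rho>}"
  have Sc: "compact S"
  proof -
    have ic: "\<And>x. isCont (\<lambda>z. infdist z Z) x" by (intro continuous_intros)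
    have "closed ((\<lambda>z. infdist z Z) -` {\<rho>})" by (rule continuous_closed_vimage[OF closed_singleton ic])
    then have "closed S" by (simp add: S_def vimage_def)
    moreover have "bounded S"
      by (rule bounded_subset[OF compact_imp_bounded[OF Cc[OF rhos(1)]]]) (auto simp: S_def)
    ultimately show ?thesis by (simp add: compact_eq_bounded_closed)
  qed
  have Sph: "S \<subseteq> phase" using inph rhos by (auto simp: S_def)
  have Spos: "V z > 0" if "z \<in> S" for z
  proof -
    have "z \<notin> Z" using that rhos by (auto simp: S_def)
    then have "V z \<noteq> 0" using Sph that by (auto simp: Z_def)
    then show ?thesis using Vge[of z] by simp
  qed
  obtain c where c: "c > 0" "\<And>z. z \<in> S \<Longrightarrow> c < V z"
    using pos_lower[OF Sc continuous_on_subset[OF Vc Sph] Spos] by blast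
  define N where "N = {z. infdist z Z < \<rho>}"
  define K where "K = {z \<in> N. V z \<le> c}"
  have Kalt: "z \<in> K \<longleftrightarrow> infdist z Z \<le> \<rho> \<and> V z \<le> c" for z
  proof
    assume "infdist z Z \<le> \<rho> \<and> V z \<le> c"
    moreover have "infdist z Z \<noteq> \<rho> \<or> \<not> V z \<le> c" using c(2)[of z] by (auto simp: S_def)
    ultimately show "z \<in> K" by (auto simp: K_def N_def)
  qed (auto simp: K_def N_def)
  have Kph: "K \<subseteq> phase" using Kalt inph rhos by force
  have Kc: "compact K"
  proof -
    have eq: "K = {z \<in> {z. infdist z Z \<le> \<rho>}. V z \<le> (\<lambda>_. c) z}" using Kalt by auto
    have sub: "{z. infdist z Z \<le> \<rho>} \<subseteq> phase" using inph rhos by force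
    have "closed K" unfolding eq
      by (rule continuous_on_closed_Collect_le[OF continuous_on_subset[OF Vc sub] continuous_on_const
            compact_imp_closed[OF Cc[OF rhos(1)]]])
    moreover have "bounded K"
      by (rule bounded_subset[OF compact_imp_bounded[OF Cc[OF rhos(1)]]]) (auto simp: Kalt)
    ultimately show ?thesis by (simp add: compact_eq_bounded_closed)
  qed
  have openN: "open N" unfolding N_def by (intro open_Collect_less continuous_intros)
  have Nph: "N \<subseteq> phase" unfolding N_def using inph rhos by force
  have ZN: "Z \<subseteq> N" unfolding N_def using rhos by auto
  have crit: "V z = 0" if "z \<in> K" "(V has_derivative (\<lambda>h. 0)) (at z)" for z
  proof -
    have zp: "z \<in> phase" using Kph that(1) by auto
    have "(\<lambda>h. gr z \<bullet> h) = (\<lambda>h. 0)" by (rule has_derivative_unique[OF Vd[OF zp] that(2)])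
    then have "gr z \<bullet> gr z = 0" by metis
    then have "gr z = 0" by simp
    moreover have "infdist z Z \<le> \<rho>" using that(1) Kalt by blast
    then have "infdist z Z < en" using rhos by linarith
    ultimately show ?thesis using critV zp by blast
  qed
  have chain: "((\<lambda>s. V (z s)) has_real_derivative - (norm (gr (z t)))\<^sup>2) (at t within {0..})"
    if "z t \<in> phase" "(z has_vector_derivative F (z t)) (at t within {0..})" for z t
  proof -
    have zd: "(z has_derivative (\<lambda>h. h *\<^sub>R F (z t))) (at t within {0..})"
      using that(2) by (simp add: has_vector_derivative_def)
    have "((\<lambda>s. V (z s)) has_derivative (\<lambda>h. gr (z t) \<bullet> (h *\<^sub>R F (z t)))) (at t within {0..})"
      by (rule has_derivative_compose[OF zd Vd[OF that(1)]])
    moreover have "(\<lambda>h. gr (z t) \<bullet> (h *\<^sub>R F (z t))) = (*) (- (norm (gr (z t)))\<^sup>2)"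
      using grad_ctrl[of U dU k1 k2 E0 L0 "z t"] unfolding gr_def F_def
      by (auto simp: fun_eq_iff mult.commute)
    ultimately show ?thesis by (simp add: has_field_derivative_def)
  qed
  have inv: "\<forall>t\<ge>0. z t \<in> K"
    if z0K: "z 0 \<in> K" and zc: "continuous_on {0..} z" and oW: "open W" and KW: "K \<subseteq> W" and Wph: "W \<subseteq> phase"
      and zd: "\<And>t. t \<ge> 0 \<Longrightarrow> z t \<in> W \<Longrightarrow> (z has_vector_derivative F (z t)) (at t within {0..})"
    for z W
  proof (rule ccontr)
    assume "\<not> (\<forall>t\<ge>0. z t \<in> K)"
    then obtain t1 where t1: "t1 \<ge> 0" "z t1 \<notin> K" by auto
    define T where "T = {t \<in> {0..t1}. z t \<notin> K}"
    define s where "s = Inf T"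
    have Tne: "T \<noteq> {}" using t1 by (auto simp: T_def)
    have Tbb: "bdd_below T" by (auto simp: T_def intro: bdd_belowI[of _ 0])
    have s0: "s \<ge> 0" unfolding s_def by (rule cInf_greatest[OF Tne]) (auto simp: T_def)
    have st1: "s \<le> t1" unfolding s_def by (rule cInf_lower[OF _ Tbb]) (use t1 in \<open>auto simp: T_def\<close>)
    have before: "z t \<in> K" if "0 \<le> t" "t < s" for t
    proof (rule ccontr)
      assume "z t \<notin> K"
      then have "t \<in> T" using that st1 by (auto simp: T_def)
      then have "s \<le> t" unfolding s_def by (rule cInf_lower[OF _ Tbb])
      then show False using that by simp
    qed
    have zsK: "z s \<in> K"
    proof (cases "s = 0")
      case True then show ?thesis using z0K by simp
    next
      case False
      then have sp: "s > 0" using s0 by simp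
      have cl: "closed ({0..s} \<inter> z -` K)"
        by (rule continuous_closed_preimage[OF continuous_on_subset[OF zc] closed_atLeastAtMost
              compact_imp_closed[OF Kc]]) auto
      have "{0..<s} \<subseteq> {0..s} \<inter> z -` K" using before by auto
      then have "closure {0..<s} \<subseteq> {0..s} \<inter> z -` K" using cl by (rule closure_minimal)
      then have "{0..s} \<subseteq> z -` K" using sp by simp
      moreover have "s \<in> {0..s}" using sp by simp
      ultimately show ?thesis by blast
    qed
    obtain e where e: "e > 0" "ball (z s) e \<subseteq> W"
      using oW KW zsK open_contains_ball by blast
    obtain d where d: "d > 0" "\<And>t. t \<in> {0..} \<Longrightarrow> dist t s < d \<Longrightarrow> dist (z t) (z s) < e"
      using zc s0 e(1) unfolding continuous_on_iff by (metis atLeast_iff)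
    have inW: "z t \<in> W" if "s \<le> t" "t < s + d" for t
      using d(2)[of t] e(2) that s0 by (auto simp: dist_real_def dist_commute)
    have Vle: "V (z t) \<le> V (z s)" if "s \<le> t" "t < s + d" for t
    proof (rule mono_within[OF s0 that(1)])
      fix u assume u: "u \<in> {s..t}"
      then have u0: "u \<ge> 0" and uW: "z u \<in> W" using s0 inW[of u] that by auto
      show "((\<lambda>s. V (z s)) has_real_derivative - (norm (gr (z u)))\<^sup>2) (at u within {0..})"
        by (rule chain) (use uW Wph zd u0 in auto)
    qed simp
    have inK: "z t \<in> K" if hst: "s \<le> t" and hts: "t < s + d" for t
    proof -
      have Vs: "V (z s) \<le> c" using zsK Kalt by blast
      have Vt: "V (z t) \<le> c" using Vle[OF hst hts] Vs by linarith
      have "infdist (z t) Z \<le> \<rho>"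
      proof (rule ccontr)
        assume "\<not> infdist (z t) Z \<le> \<rho>"
        moreover have "infdist (z s) Z \<le> \<rho>" using zsK Kalt by auto
        moreover have "continuous_on {s..t} (\<lambda>u. infdist (z u) Z)"
          by (intro continuous_intros continuous_on_subset[OF zc]) (use s0 in auto)
        ultimately obtain u where u: "s \<le> u" "u \<le> t" "infdist (z u) Z = \<rho>"
          using IVT'[of "\<lambda>u. infdist (z u) Z" s \<rho> t] hst by auto
        have "z u \<in> S" using u by (simp add: S_def)
        then have "c < V (z u)" by (rule c(2))
        moreover have "V (z u) \<le> c" using Vle[of u] u hst hts Vs by linarith
        ultimately show False by simp
      qed
      then show ?thesis using Vt Kalt by simp
    qed
    have "Inf T < Inf T + d" using d by simp
    then have "\<exists>t\<in>T. t < s + d" using cInf_less_iff[OF Tne Tbb, of "Inf T + d"] by (simp add: s_def)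
    then obtain t where t: "t \<in> T" "t < s + d" by blast
    have "s \<le> t" unfolding s_def by (rule cInf_lower[OF t(1) Tbb])
    then have "z t \<in> K" using inK t(2) by simp
    then show False using t(1) by (simp add: T_def)
  qed
  have lowgrad: "\<exists>m>0. \<forall>z\<in>K. \<eta> \<le> V z \<longrightarrow> m < (norm (gr z))\<^sup>2" if eta: "\<eta> > 0" for \<eta>
  proof -
    define Q where "Q = {z \<in> K. (\<lambda>_. \<eta>) z \<le> V z}"
    have Qc: "compact Q"
    proof -
      have "closed Q" unfolding Q_def
        by (rule continuous_on_closed_Collect_le[OF continuous_on_const continuous_on_subset[OF Vc Kph]
              compact_imp_closed[OF Kc]])
      moreover have "bounded Q" by (rule bounded_subset[OF compact_imp_bounded[OF Kc]]) (auto simp: Q_def)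
      ultimately show ?thesis by (simp add: compact_eq_bounded_closed)
    qed
    have Qph: "Q \<subseteq> phase" using Kph by (auto simp: Q_def)
    have "continuous_on Q (\<lambda>z. (norm (gr z))\<^sup>2)"
      by (intro continuous_intros continuous_on_subset[OF grc Qph])
    moreover have "(norm (gr z))\<^sup>2 > 0" if "z \<in> Q" for z
    proof -
      have zK: "z \<in> K" and Vz: "\<eta> \<le> V z" using that by (auto simp: Q_def)
      have "infdist z Z \<le> \<rho>" using zK Kalt by blast
      then have "infdist z Z < en" using rhos by linarith
      then have "gr z \<noteq> 0" using critV[of z] zK Kph Vz eta by auto
      then show ?thesis by simp
    qed
    ultimately obtain m where "m > 0" "\<And>z. z \<in> Q \<Longrightarrow> m < (norm (gr z))\<^sup>2"
      using pos_lower[OF Qc] by blast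
    then show ?thesis by (auto simp: Q_def)
  qed
  have lowV: "\<exists>\<eta>>0. \<forall>z\<in>K. V z < \<eta> \<longrightarrow> infdist z Z < \<epsilon>" if eps: "\<epsilon> > 0" for \<epsilon>
  proof -
    define Q where "Q = {z \<in> K. (\<lambda>_. \<epsilon>) z \<le> infdist z Z}"
    have Qc: "compact Q"
    proof -
      have "closed Q" unfolding Q_def
        by (rule continuous_on_closed_Collect_le[OF continuous_on_const _ compact_imp_closed[OF Kc]])
           (intro continuous_intros)
      moreover have "bounded Q" by (rule bounded_subset[OF compact_imp_bounded[OF Kc]]) (auto simp: Q_def)
      ultimately show ?thesis by (simp add: compact_eq_bounded_closed)
    qed
    have Qph: "Q \<subseteq> phase" using Kph by (auto simp: Q_def)
    have "V z > 0" if "z \<in> Q" for z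
    proof -
      have "z \<notin> Z" using that eps by (auto simp: Q_def)
      then have "V z \<noteq> 0" using Qph that by (auto simp: Z_def)
      then show ?thesis using Vge[of z] by simp
    qed
    then obtain \<eta> where eta: "\<eta> > 0" "\<And>z. z \<in> Q \<Longrightarrow> \<eta> < V z"
      using pos_lower[OF Qc continuous_on_subset[OF Vc Qph]] by blast
    show ?thesis
    proof (intro exI conjI ballI impI)
      show "\<eta> > 0" by (rule eta(1))
    next
      fix z assume zK: "z \<in> K" and Vz: "V z < \<eta>"
      show "infdist z Z < \<epsilon>"
      proof (rule ccontr)
        assume "\<not> infdist z Z < \<epsilon>"
        then have "z \<in> Q" using zK by (simp add: Q_def)
        then show False using eta(2) Vz by fastforce
      qed
    qed
  qed
  have exist: "\<exists>z. z 0 = z0 \<and> (\<forall>t\<ge>0. z t \<in> phase \<and> (z has_vector_derivative F (z t)) (at t within {0..}))"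
    if z0K: "z0 \<in> K" for z0
  proof -
    define a where "a = m0 / 4"
    define b where "b = R + m0"
    define B where "B = {z::state. a \<le> norm (fst z) \<and> norm (fst z) \<le> b \<and> norm (snd z) \<le> b}"
    have a0: "0 < a" using m0 by (simp add: a_def)
    have "LB B F" unfolding B_def F_def by (rule F_LB[OF U_deriv dU_deriv ddU_cont a0])
    then obtain LF MF where LF: "LF-lipschitz_on B F" and MF0: "MF > 0" and MF: "\<And>z. z \<in> B \<Longrightarrow> norm (F z) \<le> MF"
      unfolding LB_def bounded_pos by blast
    define A where "A = {z. infdist z Z \<le> \<rho>2}"
    have AB: "A \<subseteq> B"
    proof
      fix z assume "z \<in> A"
      then have "infdist z Z \<le> \<rho>2" by (simp add: A_def)
      from near[OF this] rhos show "z \<in> B" by (auto simp: B_def a_def b_def)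
    qed
    define p where "p z = max 0 (min 1 ((\<rho>2 - infdist z Z) / (\<rho>2 - \<rho>1)))" for z
    define G where "G z = p z *\<^sub>R F z" for z
    have plip: "(1 / (\<rho>2 - \<rho>1))-lipschitz_on UNIV p"
      unfolding p_def by (rule phi_lip) (use rhos in simp)
    have p0: "p z = 0" if "z \<notin> A" for z
    proof -
      have "(\<rho>2 - infdist z Z) / (\<rho>2 - \<rho>1) < 0" using that rhos by (simp add: A_def divide_neg_pos)
      then show ?thesis by (simp add: p_def)
    qed
    have p01: "0 \<le> p z \<and> p z \<le> 1" for z by (simp add: p_def)
    have p1: "p z = 1" if "infdist z Z < \<rho>1" for z
    proof -
      have "1 \<le> (\<rho>2 - infdist z Z) / (\<rho>2 - \<rho>1)" using that rhos by (simp add: divide_simps)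
      then show ?thesis by (simp add: p_def)
    qed
    have Glip: "(LF + 1 / (\<rho>2 - \<rho>1) * MF)-lipschitz_on UNIV G"
      unfolding G_def
      by (rule cutoff_lip[OF lipschitz_on_subset[OF LF AB] _ _ plip p0 p01]) (use MF AB MF0 in auto)
    have Gb: "norm (G z) \<le> MF" for z
    proof (cases "z \<in> A")
      case True
      have "norm (G z) = p z * norm (F z)" using p01[of z] by (simp add: G_def)
      also have "\<dots> \<le> 1 * MF" using p01[of z] MF[of z] AB True by (intro mult_mono) auto
      finally show ?thesis by simp
    next
      case False then show ?thesis using p0 MF0 by (simp add: G_def)
    qed
    obtain z where z0: "z 0 = z0" and zd: "\<forall>t\<ge>0. (z has_vector_derivative G (z t)) (at t within {0..})"
      using picard_global[OF Glip Gb] by blast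
    have zc: "continuous_on {0..} z"
      unfolding continuous_on_eq_continuous_within
    proof
      fix x :: real assume "x \<in> {0..}"
      then have "(z has_vector_derivative G (z x)) (at x within {0..})" using zd by simp
      then show "continuous (at x within {0..}) z" by (rule has_vector_derivative_continuous)
    qed
    define W where "W = {z. infdist z Z < \<rho>1}"
    have oW: "open W" unfolding W_def by (intro open_Collect_less continuous_intros)
    have KW: "K \<subseteq> W"
    proof
      fix y assume "y \<in> K"
      then have "infdist y Z \<le> \<rho>" using Kalt by blast
      then show "y \<in> W" using rhos by (simp add: W_def)
    qed
    have Wph: "W \<subseteq> phase" using inph rhos by (force simp: W_def)
    have GF: "G y = F y" if "y \<in> W" for y using p1 that by (simp add: G_def W_def)
    have zdF: "(z has_vector_derivative F (z t)) (at t within {0..})" if "t \<ge> 0" "z t \<in> W" for t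
      using zd that GF by metis
    have allK: "\<forall>t\<ge>0. z t \<in> K"
      by (rule inv[OF _ zc oW KW Wph zdF]) (use z0 z0K in auto)
    show ?thesis
    proof (intro exI conjI allI impI)
      show "z 0 = z0" by (rule z0)
    next
      fix t :: real assume t: "t \<ge> 0"
      then show "z t \<in> phase" using allK Kph by auto
      show "(z has_vector_derivative F (z t)) (at t within {0..})"
        using zdF[OF t] allK KW t by auto
    qed
  qed
  have conv: "(\<forall>t\<ge>0. z t \<in> K) \<and> ((\<lambda>t. infdist (z t) Z) \<longlongrightarrow> 0) at_top"
    if z0K: "z 0 \<in> K" and H: "\<forall>t\<ge>0. z t \<in> phase \<and> (z has_vector_derivative F (z t)) (at t within {0..})"
    for z
  proof -
    have zc: "continuous_on {0..} z"
      unfolding continuous_on_eq_continuous_within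
    proof
      fix x :: real assume "x \<in> {0..}"
      then have "(z has_vector_derivative F (z x)) (at x within {0..})" using H by simp
      then show "continuous (at x within {0..}) z" by (rule has_vector_derivative_continuous)
    qed
    have allK: "\<forall>t\<ge>0. z t \<in> K"
      by (rule inv[OF z0K zc openphase Kph subset_refl]) (use H in auto)
    have dV: "((\<lambda>s. V (z s)) has_real_derivative - (norm (gr (z t)))\<^sup>2) (at t within {0..})" if "t \<ge> 0" for t
      using chain H that by blast
    have Vmono: "V (z t2) \<le> V (z t1)" if "0 \<le> t1" "t1 \<le> t2" for t1 t2
      by (rule mono_within[where f'="\<lambda>s. - (norm (gr (z s)))\<^sup>2", OF that]) (use dV that in auto)
    have small: "\<exists>T\<ge>0. V (z T) < \<eta>" if eta: "\<eta> > 0" for \<eta>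
    proof (rule ccontr)
      assume "\<not> ?thesis"
      then have big: "\<And>T. T \<ge> 0 \<Longrightarrow> \<eta> \<le> V (z T)" by force
      obtain m where m: "m > 0" "\<And>y. y \<in> K \<Longrightarrow> \<eta> \<le> V y \<Longrightarrow> m < (norm (gr y))\<^sup>2"
        using lowgrad[OF eta] by blast
      define t where "t = c / m + 1"
      have t0: "t \<ge> 0" using c m by (simp add: t_def)
      have "V (z t) + m * t \<le> V (z 0) + m * 0"
      proof (rule mono_within[of 0 t _ "\<lambda>s. - (norm (gr (z s)))\<^sup>2 + m"])
        fix u assume u: "u \<in> {0..t}"
        show "((\<lambda>s. V (z s) + m * s) has_real_derivative - (norm (gr (z u)))\<^sup>2 + m) (at u within {0..})"
          using dV[of u] u by (auto intro!: derivative_eq_intros)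
        show "- (norm (gr (z u)))\<^sup>2 + m \<le> 0"
          using m(2)[of "z u"] allK big[of u] u by force
      qed (use t0 in auto)
      moreover have "V (z 0) \<le> c" using z0K Kalt by auto
      ultimately have "V (z t) \<le> c - m * t" by simp
      also have "\<dots> = - m" using m by (simp add: t_def algebra_simps)
      finally show False using Vge[of "z t"] m by simp
    qed
    have lim: "((\<lambda>t. infdist (z t) Z) \<longlongrightarrow> 0) at_top"
      unfolding tendsto_iff eventually_at_top_linorder
    proof (intro allI impI)
      fix \<epsilon> :: real assume eps: "\<epsilon> > 0"
      obtain \<eta> where eta: "\<eta> > 0" "\<And>y. y \<in> K \<Longrightarrow> V y < \<eta> \<Longrightarrow> infdist y Z < \<epsilon>"
        using lowV[OF eps] by blast
      obtain T where T: "T \<ge> 0" "V (z T) < \<eta>" using small[OF eta(1)] by blast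
      show "\<exists>N. \<forall>n\<ge>N. dist (infdist (z n) Z) 0 < \<epsilon>"
      proof (intro exI allI impI)
        fix t assume "t \<ge> T"
        then have "V (z t) < \<eta>" "z t \<in> K" using Vmono[of T t] T allK by auto
        then show "dist (infdist (z t) Z) 0 < \<epsilon>" using eta(2) by (simp add: infdist_nonneg)
      qed
    qed
    show ?thesis using allK lim by blast
  qed
  show ?thesis
    unfolding E0_def[symmetric] L0_def[symmetric] V_def[symmetric] F_def[symmetric] Z_def[symmetric] Zeq
  proof (intro exI[of _ N] exI[of _ c] conjI)
    show "open N" by (rule openN)
    show "N \<subseteq> phase" by (rule Nph)
    show "Z \<subseteq> N" by (rule ZN)
    show "c > 0" by (rule c(1))
    show "compact {z \<in> N. V z \<le> c}" using Kc unfolding K_def .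
    show "\<forall>z\<in>{z \<in> N. V z \<le> c}. (V has_derivative (\<lambda>h. 0)) (at z) \<longrightarrow> V z = 0"
      using crit unfolding K_def by blast
    show "\<forall>z0\<in>{z \<in> N. V z \<le> c}. \<exists>z. z 0 = z0 \<and>
            (\<forall>t\<ge>0. z t \<in> phase \<and> (z has_vector_derivative F (z t)) (at t within {0..}))"
      using exist unfolding K_def by blast
    show "\<forall>z. z 0 \<in> {z \<in> N. V z \<le> c} \<and>
            (\<forall>t\<ge>0. z t \<in> phase \<and> (z has_vector_derivative F (z t)) (at t within {0..})) \<longrightarrow>
            (\<forall>t\<ge>0. z t \<in> {z \<in> N. V z \<le> c}) \<and> ((\<lambda>t. infdist (z t) Z) \<longlongrightarrow> 0) at_top"
      using conv unfolding K_def by blast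
  qed
qed

end
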